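(* Let $f(X)=\frac12\langle X,\mathcal A(X)\rangle-\langle B^\star,X\rangle$ where $\mathcal A$ is a symmetric positive semidefinite linear operator on $\mathbb{R}^{m\times n}$, $B^\star=\mathcal A(M^\star)$ and $M^\star\in\mathcal M_k$. Suppose Assumption RPD$(M^\star,\beta)$ holds with $0\le\beta<1$. Then the Riemannian Hessian of $f$ at $M^\star$ (with $\mathcal M_k$ viewed as a Riemannian submanifold of $\mathbb{R}^{m\times n}$ with the Frobenius inner product, so that $\langle\operatorname{Hess}f(M^\star)[Z],Z\rangle=\frac{d^2}{dt^2}f(\operatorname{Exp}_{M^\star}(tZ))|_{t=0}$ for the exponential map $\operatorname{Exp}$) is positive definite: $$\min_{0\ne W\in T_{M^\star}\mathcal M_k}\frac{\langle\operatorname{Hess}f(M^\star)[W],W\rangle}{\|W\|_F^2}\ge 1-\beta>0.$$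
   Context: $\mathcal M_k$ is the set of real $m\times n$ matrices of rank exactly $k$, a smooth manifold; $\langle A,B\rangle=\operatorname{tr}(A^TB)$. Assumption RPD$(M^\star,\beta)$: $(1-\beta)\|X-M^\star\|_F^2\le\langle X-M^\star,\mathcal A(X-M^\star)\rangle\le(1+\beta)\|X-M^\star\|_F^2$ for all $X\in\mathcal M_k$. *)

theory Defs
  imports "HOL-Analysis.Analysis"
begin

text \<open>Real m x n matrices are the type real^'n^'m. The Euclidean inner product on this
type is x \<bullet> y = (sum over i,j of x$i$j * y$i$j) = tr(x^T y), i.e. the Frobenius inner
product, and norm is the Frobenius norm.\<close>

definition fixed_rank :: "nat \<Rightarrow> (real^'n^'m) set" where
  "fixed_rank k = {X. rank X = k}"

definition tangent_space :: "(real^'n^'m) set \<Rightarrow> real^'n^'m \<Rightarrow> (real^'n^'m) set" where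
  "tangent_space S x = {v. \<exists>(c::real \<Rightarrow> real^'n^'m) e. e > 0 \<and> c 0 = x \<and>
      (\<forall>t\<in>{-e<..<e}. c t \<in> S \<and> c differentiable (at t)) \<and>
      (c has_vector_derivative v) (at 0)}"

text \<open>Geodesic of S viewed as a Riemannian submanifold of the Euclidean space of matrices:
a twice differentiable curve on (-e,e) staying in S whose acceleration is normal to the
tangent space at every point.\<close>
definition submanifold_geodesic ::
  "(real^'n^'m) set \<Rightarrow> (real \<Rightarrow> real^'n^'m) \<Rightarrow> real \<Rightarrow> bool" where
  "submanifold_geodesic S c e \<longleftrightarrow> e > 0 \<and>
     (\<exists>c' c''. \<forall>t\<in>{-e<..<e}. c t \<in> S \<and>
        (c has_vector_derivative c' t) (at t) \<and>
        (c' has_vector_derivative c'' t) (at t) \<and>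
        (\<forall>v\<in>tangent_space S (c t). c'' t \<bullet> v = 0))"

text \<open>Quadratic form of the Riemannian Hessian along a geodesic c with c(0) = x, c'(0) = Z:
 d^2/dt^2 f(Exp_x(tZ)) at t = 0.\<close>
definition hess_quad_along :: "(real^'n^'m \<Rightarrow> real) \<Rightarrow> (real \<Rightarrow> real^'n^'m) \<Rightarrow> real" where
  "hess_quad_along f c = deriv (deriv (\<lambda>t. f (c t))) 0"

end

theory Submission
  imports Defs
begin

lemma d1:
  fixes A :: "real^'n^'m \<Rightarrow> real^'n^'m" and c :: "real \<Rightarrow> real^'n^'m"
  assumes lin: "linear A" and sym: "\<forall>X Y. X \<bullet> A Y = A X \<bullet> Y"
  and d: "(c has_vector_derivative v) (at t)"
  shows "((\<lambda>t. (1/2) * (c t \<bullet> A (c t)) - A M \<bullet> c t) has_real_derivative (v \<bullet> A (c t) - A M \<bullet> v)) (at t)"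
proof -
  have bl: "bounded_linear A" using lin by (simp add: linear_conv_bounded_linear)
  have d1: "(c has_derivative (\<lambda>h. h *\<^sub>R v)) (at t)" using d by (simp add: has_vector_derivative_def)
  have d2: "((\<lambda>t. A (c t)) has_derivative (\<lambda>h. A (h *\<^sub>R v))) (at t)"
    using bounded_linear.has_derivative[OF bl d1] .
  have "((\<lambda>t. (1/2) * (c t \<bullet> A (c t)) - A M \<bullet> c t) has_derivative
     (\<lambda>h. (1/2) * (c t \<bullet> A (h *\<^sub>R v) + (h *\<^sub>R v) \<bullet> A (c t)) - A M \<bullet> (h *\<^sub>R v))) (at t)"
    using has_derivative_diff[OF has_derivative_mult_right[OF has_derivative_inner[OF d1 d2], of "1/2"] has_derivative_inner_right[OF d1, of "A M"]]
    by (simp add: add.commute)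
  moreover have "(\<lambda>h. (1/2) * (c t \<bullet> A (h *\<^sub>R v) + (h *\<^sub>R v) \<bullet> A (c t)) - A M \<bullet> (h *\<^sub>R v)) = (\<lambda>h. h * (v \<bullet> A (c t) - A M \<bullet> v))"
  proof
    fix h
    have "c t \<bullet> A (h *\<^sub>R v) = h * (v \<bullet> A (c t))"
      using sym linear.scaleR[OF lin] by (metis inner_commute inner_scaleR_right)
    then show "(1/2) * (c t \<bullet> A (h *\<^sub>R v) + (h *\<^sub>R v) \<bullet> A (c t)) - A M \<bullet> (h *\<^sub>R v) = h * (v \<bullet> A (c t) - A M \<bullet> v)"
      by (simp add: algebra_simps)
  qed
  ultimately show ?thesis unfolding has_field_derivative_def by (simp add: mult.commute[of _ "v \<bullet> A (c t) - A M \<bullet> v"])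
qed

lemma quot_lim:
  fixes c :: "real \<Rightarrow> 'a::real_normed_vector"
  assumes d: "(c has_vector_derivative W) (at 0)"
  shows "((\<lambda>y. (c y - c 0) /\<^sub>R y) \<longlongrightarrow> W) (at 0)"
proof -
  have "((\<lambda>y. ((c y - c 0) - (y - 0) *\<^sub>R W) /\<^sub>R norm (y - 0)) \<longlongrightarrow> 0) (at 0)"
    using d unfolding has_vector_derivative_def has_derivative_at_within by blast
  hence "((\<lambda>y. norm (((c y - c 0) - (y - 0) *\<^sub>R W) /\<^sub>R norm (y - 0))) \<longlongrightarrow> 0) (at 0)"
    by (rule tendsto_norm_zero)
  hence "((\<lambda>y. norm ((c y - c 0) /\<^sub>R y - W)) \<longlongrightarrow> 0) (at 0)"
  proof (rule Lim_transform_eventually)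
    show "\<forall>\<^sub>F y in at 0. norm (((c y - c 0) - (y - 0) *\<^sub>R W) /\<^sub>R norm (y - 0)) = norm ((c y - c 0) /\<^sub>R y - W)"
      unfolding eventually_at
    proof (intro exI[of _ 1] conjI ballI impI)
      fix y :: real assume "y \<noteq> 0 \<and> dist y 0 < 1"
      hence y: "y \<noteq> 0" by auto
      have "(c y - c 0) /\<^sub>R y - W = inverse y *\<^sub>R ((c y - c 0) - y *\<^sub>R W)"
        using y by (simp add: algebra_simps)
      thus "norm (((c y - c 0) - (y - 0) *\<^sub>R W) /\<^sub>R norm (y - 0)) = norm ((c y - c 0) /\<^sub>R y - W)"
        using y by simp
    qed simp
  qed
  hence "((\<lambda>y. (c y - c 0) /\<^sub>R y - W) \<longlongrightarrow> 0) (at 0)" by (rule tendsto_norm_zero_cancel)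
  thus ?thesis by (rule LIM_zero_cancel)
qed

lemma d2:
  fixes A :: "real^'n^'m \<Rightarrow> real^'n^'m" and c c' :: "real \<Rightarrow> real^'n^'m"
  assumes lin: "linear A" and sym: "\<forall>X Y. X \<bullet> A Y = A X \<bullet> Y"
  and d: "(c has_vector_derivative W) (at 0)" and d': "(c' has_vector_derivative V) (at 0)"
  and c0: "c 0 = M" and c'0: "c' 0 = W"
  shows "((\<lambda>t. c' t \<bullet> A (c t) - A M \<bullet> c' t) has_real_derivative (W \<bullet> A W)) (at 0)"
proof -
  have bl: "bounded_linear A" using lin by (simp add: linear_conv_bounded_linear)
  have d1: "(c has_derivative (\<lambda>h. h *\<^sub>R W)) (at 0)" using d by (simp add: has_vector_derivative_def)
  have d1': "(c' has_derivative (\<lambda>h. h *\<^sub>R V)) (at 0)" using d' by (simp add: has_vector_derivative_def)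
  have d2: "((\<lambda>t. A (c t)) has_derivative (\<lambda>h. A (h *\<^sub>R W))) (at 0)"
    using bounded_linear.has_derivative[OF bl d1] .
  have "((\<lambda>t. c' t \<bullet> A (c t) - A M \<bullet> c' t) has_derivative
     (\<lambda>h. (c' 0 \<bullet> A (h *\<^sub>R W) + (h *\<^sub>R V) \<bullet> A (c 0)) - A M \<bullet> (h *\<^sub>R V))) (at 0)"
    using has_derivative_diff[OF has_derivative_inner[OF d1' d2] has_derivative_inner_right[OF d1', of "A M"]]
    by simp
  moreover have "(\<lambda>h. (c' 0 \<bullet> A (h *\<^sub>R W) + (h *\<^sub>R V) \<bullet> A (c 0)) - A M \<bullet> (h *\<^sub>R V)) = (\<lambda>h. h * (W \<bullet> A W))"
  proof
    fix h
    have 1: "c' 0 \<bullet> A (h *\<^sub>R W) = h * (W \<bullet> A W)"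
      using c'0 linear.scaleR[OF lin] by simp
    have 2: "(h *\<^sub>R V) \<bullet> A (c 0) = h * (A M \<bullet> V)"
      using c0 sym by (simp add: inner_commute)
    show "(c' 0 \<bullet> A (h *\<^sub>R W) + (h *\<^sub>R V) \<bullet> A (c 0)) - A M \<bullet> (h *\<^sub>R V) = h * (W \<bullet> A W)"
      using 1 2 by simp
  qed
  ultimately show ?thesis unfolding has_field_derivative_def by (simp add: mult.commute[of _ "W \<bullet> A W"])
qed


theorem lemma4p5:
  fixes \<A> :: "real^'n^'m \<Rightarrow> real^'n^'m"
    and Mstar :: "real^'n^'m"
    and k :: nat and \<beta> :: real
    and f :: "real^'n^'m \<Rightarrow> real"
  assumes lin: "linear \<A>"
    and sym: "\<forall>X Y. X \<bullet> \<A> Y = \<A> X \<bullet> Y"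
    and psd: "\<forall>X. 0 \<le> X \<bullet> \<A> X"
    and f_def: "\<forall>X. f X = (1/2) * (X \<bullet> \<A> X) - \<A> Mstar \<bullet> X"
    and Mstar_rank: "Mstar \<in> fixed_rank k"
    and RPD: "\<forall>X\<in>fixed_rank k.
                (1 - \<beta>) * (norm (X - Mstar))\<^sup>2 \<le> (X - Mstar) \<bullet> \<A> (X - Mstar) \<and>
                (X - Mstar) \<bullet> \<A> (X - Mstar) \<le> (1 + \<beta>) * (norm (X - Mstar))\<^sup>2"
    and beta: "0 \<le> \<beta>" "\<beta> < 1"
  shows "(\<forall>W\<in>tangent_space (fixed_rank k) Mstar. \<forall>c e.
            W \<noteq> 0 \<and> submanifold_geodesic (fixed_rank k) c e \<and> c 0 = Mstar \<and>
            (c has_vector_derivative W) (at 0)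
            \<longrightarrow> 1 - \<beta> \<le> hess_quad_along f c / (norm W)\<^sup>2)
         \<and> 1 - \<beta> > 0"
  proof -
  have bl: "bounded_linear \<A>" using lin by (simp add: linear_conv_bounded_linear)
  have main: "1 - \<beta> \<le> hess_quad_along f c / (norm W)\<^sup>2"
    if W0: "W \<noteq> 0" and geo: "submanifold_geodesic (fixed_rank k) c e" and c0: "c 0 = Mstar"
      and dW: "(c has_vector_derivative W) (at 0)" for W c e
  proof -
    have e: "e > 0" using geo unfolding submanifold_geodesic_def by blast
    obtain c' c'' where H: "\<forall>t\<in>{-e<..<e}. c t \<in> fixed_rank k \<and>
        (c has_vector_derivative c' t) (at t) \<and> (c' has_vector_derivative c'' t) (at t)"
      using geo unfolding submanifold_geodesic_def by blast
    have z: "0 \<in> {-e<..<e}" using e by simp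
    have c'0: "c' 0 = W" using H z dW vector_derivative_unique_at by blast
    have G: "deriv (\<lambda>t. f (c t)) t = c' t \<bullet> \<A> (c t) - \<A> Mstar \<bullet> c' t" if t: "t \<in> {-e<..<e}" for t
    proof -
      have "((\<lambda>t. (1/2) * (c t \<bullet> \<A> (c t)) - \<A> Mstar \<bullet> c t) has_real_derivative (c' t \<bullet> \<A> (c t) - \<A> Mstar \<bullet> c' t)) (at t)"
        using d1[OF lin sym] H t by blast
      moreover have "(\<lambda>t. f (c t)) = (\<lambda>t. (1/2) * (c t \<bullet> \<A> (c t)) - \<A> Mstar \<bullet> c t)"
        using f_def by simp
      ultimately show ?thesis by (simp add: DERIV_imp_deriv)
    qed
    have "((\<lambda>t. c' t \<bullet> \<A> (c t) - \<A> Mstar \<bullet> c' t) has_real_derivative (W \<bullet> \<A> W)) (at 0)"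
      using d2[OF lin sym dW, of c' "c'' 0", OF _ c0 c'0] H z by blast
    hence "(deriv (\<lambda>t. f (c t)) has_real_derivative (W \<bullet> \<A> W)) (at 0)"
      by (rule has_field_derivative_transform_within_open[of _ _ _ "{-e<..<e}"]) (use z G in auto)
    hence hq: "hess_quad_along f c = W \<bullet> \<A> W"
      unfolding hess_quad_along_def by (rule DERIV_imp_deriv)
    define D where "D y = (c y - c 0) /\<^sub>R y" for y
    have lim: "(D \<longlongrightarrow> W) (at 0)" unfolding D_def by (rule quot_lim[OF dW])
    have l1: "((\<lambda>y. D y \<bullet> \<A> (D y)) \<longlongrightarrow> W \<bullet> \<A> W) (at 0)"
      by (intro tendsto_inner lim bounded_linear.tendsto[OF bl])
    have l2: "((\<lambda>y. (1 - \<beta>) * (norm (D y))\<^sup>2) \<longlongrightarrow> (1 - \<beta>) * (norm W)\<^sup>2) (at 0)"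
      by (intro tendsto_intros lim)
    have ev: "\<forall>\<^sub>F y in at 0. (1 - \<beta>) * (norm (D y))\<^sup>2 \<le> D y \<bullet> \<A> (D y)"
      unfolding eventually_at
    proof (intro exI[of _ e] conjI ballI impI)
      fix y :: real assume "y \<noteq> 0 \<and> dist y 0 < e"
      hence y: "y \<noteq> 0" "y \<in> {-e<..<e}" by auto
      define X where "X = c y - Mstar"
      have "(1 - \<beta>) * (norm X)\<^sup>2 \<le> X \<bullet> \<A> X" using RPD H y(2) unfolding X_def by blast
      hence "(inverse y)^2 * ((1 - \<beta>) * (norm X)\<^sup>2) \<le> (inverse y)^2 * (X \<bullet> \<A> X)"
        by (rule mult_left_mono) simp
      moreover have "D y = inverse y *\<^sub>R X" unfolding D_def X_def c0 by simp
      moreover have "inverse \<bar>y\<bar> * inverse \<bar>y\<bar> = inverse y * inverse y"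
        by (metis abs_mult_self_eq abs_inverse)
      ultimately show "(1 - \<beta>) * (norm (D y))\<^sup>2 \<le> D y \<bullet> \<A> (D y)"
        using linear.scaleR[OF lin] by (simp add: power2_eq_square algebra_simps)
    qed (use e in simp)
    have key: "(1 - \<beta>) * (norm W)\<^sup>2 \<le> W \<bullet> \<A> W"
      by (rule tendsto_le[OF _ l1 l2 ev]) simp
    have "0 < (norm W)\<^sup>2" using W0 by simp
    thus ?thesis using key hq by (simp add: le_divide_eq)
  qed
  show ?thesis using main beta by auto
qed

end
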